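(* Let $n$ be a positive integer, $0\le m\le\lfloor n/2\rfloor$ and $0\le k\le m$. Let $T_k$ be the Young tableau of shape $(n-k,k)$ whose first row contains $1,\dots,n-k$ and whose second row contains $n-k+1,\dots,n$, and let $R(T_k)\subseteq S_n$ be its row subgroup (permutations of $\{1,\dots,n\}$ preserving each row as a set). Let $\Omega=\{n-m+1,\dots,n\}$ and $\Omega_1=\{n-m+1,\dots,n-k\}$. Given subsets $V\subseteq\{1,\dots,k\}$ and $W\subseteq\Omega_1$, the number of $p\in R(T_k)$ such that $$W=\{\,i\in\Omega\mid p(i)\notin\Omega\cup V\,\}$$ equals $$\binom{n-m-\#V}{\#W}(\#W)!\,\binom{m-k+\#V}{m-k-\#W}(m-k-\#W)!\,k!\,(n-m)!\,.$$
   Context: $\#X$ denotes the cardinality of a finite set $X$. *)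

theory Defs
  imports "HOL-Combinatorics.Permutations"
begin

definition tableau_rows :: "nat \<Rightarrow> nat \<Rightarrow> nat set list" where
  "tableau_rows n k = [{1..n-k}, {n-k+1..n}]"

definition row_subgroup :: "nat \<Rightarrow> nat set list \<Rightarrow> (nat \<Rightarrow> nat) set" where
  "row_subgroup n rows = {p. p permutes {1..n} \<and> (\<forall>r\<in>set rows. p ` r = r)}"

end

theory Submission
  imports Defs "HOL-Library.FuncSet"
begin

definition ff :: "nat \<Rightarrow> nat \<Rightarrow> nat" where "ff a j = (a choose j) * fact j"

lemma ff_0[simp]: "ff a 0 = 1" by (simp add: ff_def)

lemma ff_step: "a * ff (a - 1) j = ff a (Suc j)"
proof (cases a)
  case 0 then show ?thesis by (simp add: ff_def)
next
  case (Suc b)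
  have "Suc b * (b choose j) = (Suc b choose Suc j) * Suc j" by (rule Suc_times_binomial_eq)
  then show ?thesis using Suc by (simp add: ff_def algebra_simps)
qed

lemma ff_step': "a * ff (a - Suc 0) j = ff a (Suc j)"
  using ff_step[of a j] by simp

lemma core0:
  assumes "x \<notin> D" "finite D" "\<And>z. z \<in> insert x D \<Longrightarrow> finite (C z)"
  shows "card {f \<in> PiE (insert x D) C. inj_on f (insert x D)}
       = (\<Sum>y\<in>C x. card {g \<in> PiE D (\<lambda>z. C z - {y}). inj_on g D})"
proof -
  let ?S = "SIGMA y:C x. {g \<in> PiE D (\<lambda>z. C z - {y}). inj_on g D}"
  have fin: "finite {g \<in> PiE D (\<lambda>z. C z - {y}). inj_on g D}" for y
    using assms by (intro finite_subset[OF _ finite_PiE[of D "\<lambda>z. C z - {y}"]]) auto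
  have "(\<Sum>y\<in>C x. card {g \<in> PiE D (\<lambda>z. C z - {y}). inj_on g D}) = card ?S"
    using assms fin by (subst card_SigmaI) auto
  also have "card ?S = card ((\<lambda>(y,g). g(x:=y)) ` ?S)"
  proof (rule card_image[symmetric], rule inj_onI, clarsimp)
    fix y g y' g'
    assume h: "g \<in> PiE D (\<lambda>z. C z - {y})" "g' \<in> PiE D (\<lambda>z. C z - {y'})" "g(x := y) = g'(x := y')"
    then have "y = y'" by (metis fun_upd_same)
    moreover have "g = g'"
    proof
      fix z show "g z = g' z"
        using h assms(1) by (cases "z = x") (auto simp: PiE_def extensional_def dest: fun_cong[of _ _ z])
    qed
    ultimately show "y = y' \<and> g = g'" by simp
  qed
  also have "(\<lambda>(y,g). g(x:=y)) ` ?S = {f \<in> PiE (insert x D) C. inj_on f (insert x D)}"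
  proof (rule set_eqI, rule iffI)
    fix f assume "f \<in> (\<lambda>(y,g). g(x:=y)) ` ?S"
    then obtain y g where f: "f = g(x:=y)" "y \<in> C x" "g \<in> PiE D (\<lambda>z. C z - {y})" "inj_on g D" by auto
    have "y \<notin> g ` D" using f(3) by (auto simp: PiE_def Pi_def)
    then show "f \<in> {f \<in> PiE (insert x D) C. inj_on f (insert x D)}"
      using f assms(1) by (auto simp: PiE_def extensional_def inj_on_def)
  next
    fix f assume f: "f \<in> {f \<in> PiE (insert x D) C. inj_on f (insert x D)}"
    let ?g = "f(x:=undefined)"
    have "?g \<in> PiE D (\<lambda>z. C z - {f x})"
      using f assms(1) by (auto simp: PiE_def extensional_def inj_on_def)
    moreover have "inj_on ?g D" using f assms(1) by (auto simp: inj_on_def)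
    moreover have "f x \<in> C x" using f by auto
    moreover have "f = ?g(x := f x)" by simp
    ultimately show "f \<in> (\<lambda>(y,g). g(x:=y)) ` ?S" by (intro image_eqI[where x="(f x, ?g)"]) auto
  qed
  finally show ?thesis by simp
qed

lemma core:
  assumes "x \<notin> D" "finite D" "\<And>z. z \<in> insert x D \<Longrightarrow> finite (C z)" "C x = K"
  shows "card {f \<in> PiE (insert x D) C. inj_on f (insert x D)}
       = (\<Sum>y\<in>K. card {g \<in> PiE D (\<lambda>z. C z - {y}). inj_on g D})"
  using core0[OF assms(1-3)] assms(4) by simp

lemma L0:
  assumes "finite X" "finite Y"
  shows "card {f \<in> PiE X (\<lambda>_. Y). inj_on f X} = ff (card Y) (card X)"
  using assms
proof (induction X arbitrary: Y rule: finite_induct)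
  case empty
  then show ?case by simp
next
  case (insert x X)
  have "card {f \<in> PiE (insert x X) (\<lambda>_. Y). inj_on f (insert x X)}
      = (\<Sum>y\<in>Y. card {g \<in> PiE X (\<lambda>z. Y - {y}). inj_on g X})"
    using insert by (intro core) auto
  also have "\<dots> = (\<Sum>y\<in>Y. ff (card Y - 1) (card X))"
    using insert by (intro sum.cong refl) (simp add: card_Diff_singleton)
  also have "\<dots> = ff (card Y) (card (insert x X))"
    using insert ff_step[of "card Y" "card X"] by simp
  finally show ?case .
qed

lemma stage3:
  assumes "finite X3" "finite X0" "finite E" "finite Y" "X3 \<inter> X0 = {}" "E \<inter> Y = {}"
  shows "card {f \<in> PiE (X3 \<union> X0) (\<lambda>z. if z \<in> X3 then E else Y). inj_on f (X3 \<union> X0)}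
       = ff (card E) (card X3) * ff (card Y) (card X0)"
  using assms
proof (induction X3 arbitrary: E rule: finite_induct)
  case empty
  have "PiE ({} \<union> X0) (\<lambda>z. if z \<in> {} then E else Y) = PiE X0 (\<lambda>_. Y)" by simp
  then show ?case using empty L0 by simp
next
  case (insert x X3)
  have dom: "insert x X3 \<union> X0 = insert x (X3 \<union> X0)" by auto
  have "card {f \<in> PiE (insert x X3 \<union> X0) (\<lambda>z. if z \<in> insert x X3 then E else Y). inj_on f (insert x X3 \<union> X0)}
      = (\<Sum>y\<in>E. card {g \<in> PiE (X3 \<union> X0) (\<lambda>z. (if z \<in> insert x X3 then E else Y) - {y}). inj_on g (X3 \<union> X0)})"
    unfolding dom by (rule core) (use insert.hyps insert.prems in auto)
  also have "\<dots> = (\<Sum>y\<in>E. ff (card E - 1) (card X3) * ff (card Y) (card X0))"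
  proof (intro sum.cong refl)
    fix y assume y: "y \<in> E"
    have pe: "PiE (X3 \<union> X0) (\<lambda>z. (if z \<in> insert x X3 then E else Y) - {y})
        = PiE (X3 \<union> X0) (\<lambda>z. if z \<in> X3 then E - {y} else Y)"
      using insert.hyps insert.prems y by (intro PiE_cong) auto
    show "card {g \<in> PiE (X3 \<union> X0) (\<lambda>z. (if z \<in> insert x X3 then E else Y) - {y}). inj_on g (X3 \<union> X0)}
        = ff (card E - 1) (card X3) * ff (card Y) (card X0)"
    proof -
      have ih: "card {g \<in> PiE (X3 \<union> X0) (\<lambda>z. if z \<in> X3 then E - {y} else Y). inj_on g (X3 \<union> X0)}
          = ff (card (E - {y})) (card X3) * ff (card Y) (card X0)"
        by (rule insert.IH) (use insert.prems y in auto)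
      show ?thesis unfolding pe ih using insert.prems y by (simp add: card_Diff_singleton)
    qed
  qed
  also have "\<dots> = ff (card E) (card (insert x X3)) * ff (card Y) (card X0)"
    using insert.hyps insert.prems by (simp add: ff_step' mult.assoc[symmetric])
  finally show ?case .
qed

lemma stage2:
  assumes "finite X2" "finite X3" "finite X0" "finite B" "finite E" "finite Y"
    "X2 \<inter> X3 = {}" "X2 \<inter> X0 = {}" "X3 \<inter> X0 = {}" "B \<subseteq> Y" "E \<inter> Y = {}"
  shows "card {f \<in> PiE (X2 \<union> X3 \<union> X0) (\<lambda>z. if z \<in> X2 then B else if z \<in> X3 then E else Y).
              inj_on f (X2 \<union> X3 \<union> X0)}
       = ff (card B) (card X2) * ff (card E) (card X3) * ff (card Y - card X2) (card X0)"
  using assms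
proof (induction X2 arbitrary: B Y rule: finite_induct)
  case empty
  have "PiE ({} \<union> X3 \<union> X0) (\<lambda>z. if z \<in> {} then B else if z \<in> X3 then E else Y)
      = PiE (X3 \<union> X0) (\<lambda>z. if z \<in> X3 then E else Y)" by simp
  then show ?case using empty stage3[of X3 X0 E Y] by simp
next
  case (insert x X2)
  have dom: "insert x X2 \<union> X3 \<union> X0 = insert x (X2 \<union> X3 \<union> X0)" by auto
  have "card {f \<in> PiE (insert x X2 \<union> X3 \<union> X0) (\<lambda>z. if z \<in> insert x X2 then B else if z \<in> X3 then E else Y).
              inj_on f (insert x X2 \<union> X3 \<union> X0)}
      = (\<Sum>y\<in>B. card {g \<in> PiE (X2 \<union> X3 \<union> X0) (\<lambda>z. (if z \<in> insert x X2 then B else if z \<in> X3 then E else Y) - {y}).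
              inj_on g (X2 \<union> X3 \<union> X0)})"
    unfolding dom by (rule core) (use insert.hyps insert.prems in auto)
  also have "\<dots> = (\<Sum>y\<in>B. ff (card B - 1) (card X2) * ff (card E) (card X3) * ff (card Y - card (insert x X2)) (card X0))"
  proof (intro sum.cong refl)
    fix y assume y: "y \<in> B"
    have pe: "PiE (X2 \<union> X3 \<union> X0) (\<lambda>z. (if z \<in> insert x X2 then B else if z \<in> X3 then E else Y) - {y})
        = PiE (X2 \<union> X3 \<union> X0) (\<lambda>z. if z \<in> X2 then B - {y} else if z \<in> X3 then E else Y - {y})"
      using insert.hyps insert.prems y by (intro PiE_cong) auto
    have cd: "card (Y - {y}) - card X2 = card Y - card (insert x X2)"
      using insert.hyps insert.prems y by (auto simp: card_Diff_singleton)
    show "card {g \<in> PiE (X2 \<union> X3 \<union> X0) (\<lambda>z. (if z \<in> insert x X2 then B else if z \<in> X3 then E else Y) - {y}).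
              inj_on g (X2 \<union> X3 \<union> X0)}
        = ff (card B - 1) (card X2) * ff (card E) (card X3) * ff (card Y - card (insert x X2)) (card X0)"
    proof -
      have ih: "card {g \<in> PiE (X2 \<union> X3 \<union> X0) (\<lambda>z. if z \<in> X2 then B - {y} else if z \<in> X3 then E else Y - {y}).
              inj_on g (X2 \<union> X3 \<union> X0)}
          = ff (card (B - {y})) (card X2) * ff (card E) (card X3) * ff (card (Y - {y}) - card X2) (card X0)"
        by (rule insert.IH) (use insert.prems y in auto)
      show ?thesis unfolding pe ih cd[symmetric] using insert.prems y by (simp add: card_Diff_singleton)
    qed
  qed
  also have "\<dots> = ff (card B) (card (insert x X2)) * ff (card E) (card X3) * ff (card Y - card (insert x X2)) (card X0)"
    using insert.hyps insert.prems by (simp add: ff_step' mult.assoc[symmetric])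
  finally show ?case .
qed

lemma stage1:
  assumes "finite X1" "finite X2" "finite X3" "finite X0" "finite A" "finite B" "finite E" "finite Y"
    "X1 \<inter> X2 = {}" "X1 \<inter> X3 = {}" "X1 \<inter> X0 = {}"
    "X2 \<inter> X3 = {}" "X2 \<inter> X0 = {}" "X3 \<inter> X0 = {}" "A \<subseteq> Y" "B \<subseteq> Y" "A \<inter> B = {}" "E \<inter> Y = {}"
  shows "card {f \<in> PiE (X1 \<union> X2 \<union> X3 \<union> X0)
                (\<lambda>z. if z \<in> X1 then A else if z \<in> X2 then B else if z \<in> X3 then E else Y).
              inj_on f (X1 \<union> X2 \<union> X3 \<union> X0)}
       = ff (card A) (card X1) * ff (card B) (card X2) * ff (card E) (card X3)
         * ff (card Y - card X1 - card X2) (card X0)"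
  using assms
proof (induction X1 arbitrary: A Y rule: finite_induct)
  case empty
  have "PiE ({} \<union> X2 \<union> X3 \<union> X0) (\<lambda>z. if z \<in> {} then A else if z \<in> X2 then B else if z \<in> X3 then E else Y)
      = PiE (X2 \<union> X3 \<union> X0) (\<lambda>z. if z \<in> X2 then B else if z \<in> X3 then E else Y)" by simp
  then show ?case using empty stage2[of X2 X3 X0 B E Y] by simp
next
  case (insert x X1)
  have dom: "insert x X1 \<union> X2 \<union> X3 \<union> X0 = insert x (X1 \<union> X2 \<union> X3 \<union> X0)" by auto
  have "card {f \<in> PiE (insert x X1 \<union> X2 \<union> X3 \<union> X0)
                (\<lambda>z. if z \<in> insert x X1 then A else if z \<in> X2 then B else if z \<in> X3 then E else Y).
              inj_on f (insert x X1 \<union> X2 \<union> X3 \<union> X0)}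
      = (\<Sum>y\<in>A. card {g \<in> PiE (X1 \<union> X2 \<union> X3 \<union> X0)
                (\<lambda>z. (if z \<in> insert x X1 then A else if z \<in> X2 then B else if z \<in> X3 then E else Y) - {y}).
              inj_on g (X1 \<union> X2 \<union> X3 \<union> X0)})"
    unfolding dom by (rule core) (use insert.hyps insert.prems in auto)
  also have "\<dots> = (\<Sum>y\<in>A. ff (card A - 1) (card X1) * ff (card B) (card X2) * ff (card E) (card X3)
         * ff (card Y - card (insert x X1) - card X2) (card X0))"
  proof (intro sum.cong refl)
    fix y assume y: "y \<in> A"
    have pe: "PiE (X1 \<union> X2 \<union> X3 \<union> X0)
                (\<lambda>z. (if z \<in> insert x X1 then A else if z \<in> X2 then B else if z \<in> X3 then E else Y) - {y})
        = PiE (X1 \<union> X2 \<union> X3 \<union> X0)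
                (\<lambda>z. if z \<in> X1 then A - {y} else if z \<in> X2 then B else if z \<in> X3 then E else Y - {y})"
      using insert.hyps insert.prems y by (intro PiE_cong) auto
    have cd: "card (Y - {y}) - card X1 - card X2 = card Y - card (insert x X1) - card X2"
      using insert.hyps insert.prems y by (auto simp: card_Diff_singleton)
    show "card {g \<in> PiE (X1 \<union> X2 \<union> X3 \<union> X0)
                (\<lambda>z. (if z \<in> insert x X1 then A else if z \<in> X2 then B else if z \<in> X3 then E else Y) - {y}).
              inj_on g (X1 \<union> X2 \<union> X3 \<union> X0)}
        = ff (card A - 1) (card X1) * ff (card B) (card X2) * ff (card E) (card X3)
         * ff (card Y - card (insert x X1) - card X2) (card X0)"
    proof -
      have ih: "card {g \<in> PiE (X1 \<union> X2 \<union> X3 \<union> X0)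
                (\<lambda>z. if z \<in> X1 then A - {y} else if z \<in> X2 then B else if z \<in> X3 then E else Y - {y}).
              inj_on g (X1 \<union> X2 \<union> X3 \<union> X0)}
          = ff (card (A - {y})) (card X1) * ff (card B) (card X2) * ff (card E) (card X3)
         * ff (card (Y - {y}) - card X1 - card X2) (card X0)"
        by (rule insert.IH) (use insert.prems y in auto)
      show ?thesis unfolding pe ih cd[symmetric] using insert.prems y by (simp add: card_Diff_singleton)
    qed
  qed
  also have "\<dots> = ff (card A) (card (insert x X1)) * ff (card B) (card X2) * ff (card E) (card X3)
         * ff (card Y - card (insert x X1) - card X2) (card X0)"
    using insert.hyps insert.prems by (simp add: ff_step' mult.assoc[symmetric])
  finally show ?case .
qed



theorem lemma4:
  fixes n m k :: nat and V W :: "nat set"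
  assumes "0 < n" and "m \<le> n div 2" and "k \<le> m"
    and "V \<subseteq> {1..k}" and "W \<subseteq> {n-m+1..n-k}"
  shows "card {p \<in> row_subgroup n (tableau_rows n k).
            W = {i \<in> {n-m+1..n}. p i \<notin> {n-m+1..n} \<union> V}}
         = ((n - m - card V) choose card W) * fact (card W)
           * ((m - k + card V) choose (m - k - card W)) * fact (m - k - card W)
           * fact k * fact (n - m)"
proof -
  have mn: "m \<le> n - m" using assms(2) by linarith
  have Vr: "1 \<le> x \<and> x \<le> k" if "x \<in> V" for x using assms(4) that by auto
  have fV0: "finite V" using finite_subset[OF assms(4)] by simp
  have Wr: "n-m+1 \<le> x \<and> x \<le> n-k" if "x \<in> W" for x using assms(5) that by auto
  define C where "C = (\<lambda>z. if z \<in> W then {1..n-m} - V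
     else if z \<in> {n-m+1..n-k} - W then {n-m+1..n-k} \<union> V
     else if z \<in> {n-k+1..n} then {n-k+1..n} else {1..n-k})"
  let ?P = "{p \<in> row_subgroup n (tableau_rows n k).
            W = {i \<in> {n-m+1..n}. p i \<notin> {n-m+1..n} \<union> V}}"
  let ?F = "{f \<in> PiE {1..n} C. inj_on f {1..n}}"
  have Vs: "V \<subseteq> {1..n-m}" using assms(4) assms(3) mn by auto
  have key: "p \<in> ?P \<longleftrightarrow> (\<forall>z\<in>{1..n}. p z \<in> C z)" if pp: "p permutes {1..n}" for p
  proof
    assume "p \<in> ?P"
    then have r1: "p ` {1..n-k} = {1..n-k}" and r2: "p ` {n-k+1..n} = {n-k+1..n}"
      and weq: "W = {i \<in> {n-m+1..n}. p i \<notin> {n-m+1..n} \<union> V}"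
      by (auto simp: row_subgroup_def tableau_rows_def)
    show "\<forall>z\<in>{1..n}. p z \<in> C z"
    proof
      fix z assume z: "z \<in> {1..n}"
      show "p z \<in> C z"
      proof (cases "z \<le> n - k")
        case True
        then have pz: "p z \<in> {1..n-k}" using r1 z by auto
        show ?thesis
        proof (cases "z \<in> W")
          case True
          then have "p z \<notin> {n-m+1..n} \<union> V" using weq by blast
          then show ?thesis using pz True unfolding C_def by auto
        next
          case False
          show ?thesis
          proof (cases "z \<ge> n - m + 1")
            case True
            then have "p z \<in> {n-m+1..n} \<union> V" using weq \<open>z \<notin> W\<close> z by auto
            then show ?thesis using pz True \<open>z \<notin> W\<close> \<open>z \<le> n - k\<close> unfolding C_def by auto
          next
            case False
            then show ?thesis using pz \<open>z \<notin> W\<close> \<open>z \<le> n - k\<close> assms(3) unfolding C_def by auto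
          qed
        qed
      next
        case False
        then have "p z \<in> {n-k+1..n}" using r2 z by auto
        moreover have "z \<notin> W" using False assms(5) by auto
        ultimately show ?thesis using False z unfolding C_def by auto
      qed
    qed
  next
    assume c: "\<forall>z\<in>{1..n}. p z \<in> C z"
    have inj: "inj_on p A" for A using pp permutes_inj inj_on_subset by blast
    have s1: "p ` {1..n-k} \<subseteq> {1..n-k}"
    proof
      fix y assume "y \<in> p ` {1..n-k}"
      then obtain z where z: "z \<in> {1..n-k}" "y = p z" by auto
      then have "p z \<in> C z" using c by auto
      then show "y \<in> {1..n-k}" using z Vs mn assms(3) unfolding C_def by (auto split: if_splits)
    qed
    have s2: "p ` {n-k+1..n} \<subseteq> {n-k+1..n}"
    proof
      fix y assume "y \<in> p ` {n-k+1..n}"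
      then obtain z where z: "z \<in> {n-k+1..n}" "y = p z" by auto
      then have "p z \<in> C z" using c by auto
      then show "y \<in> {n-k+1..n}" using z assms(5) unfolding C_def by (auto split: if_splits)
    qed
    have "p ` {1..n-k} = {1..n-k}" by (rule endo_inj_surj) (use s1 inj in auto)
    moreover have "p ` {n-k+1..n} = {n-k+1..n}" by (rule endo_inj_surj) (use s2 inj in auto)
    moreover have "W = {i \<in> {n-m+1..n}. p i \<notin> {n-m+1..n} \<union> V}"
    proof (rule set_eqI)
      fix i
      show "i \<in> W \<longleftrightarrow> i \<in> {i \<in> {n-m+1..n}. p i \<notin> {n-m+1..n} \<union> V}"
      proof (cases "i \<in> {1..n}")
        case True
        then have "p i \<in> C i" using c by auto
        then show ?thesis using True assms(5) assms(3) mn Vs unfolding C_def by (auto split: if_splits)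
      next
        case False
        then show ?thesis using subsetD[OF assms(5), of i] by auto
      qed
    qed
    ultimately show "p \<in> ?P" using pp by (simp add: row_subgroup_def tableau_rows_def)
  qed
  have "card ?P = card ((\<lambda>p. restrict p {1..n}) ` ?P)"
  proof (rule card_image[symmetric], rule inj_onI)
    fix p q assume "p \<in> ?P" "q \<in> ?P" and e: "restrict p {1..n} = restrict q {1..n}"
    then have pp: "p permutes {1..n}" and qp: "q permutes {1..n}" by (auto simp: row_subgroup_def)
    show "p = q"
    proof
      fix x show "p x = q x"
      proof (cases "x \<in> {1..n}")
        case True then show ?thesis using e by (metis restrict_apply')
      next
        case False then show ?thesis using pp qp by (simp add: permutes_def)
      qed
    qed
  qed
  also have "(\<lambda>p. restrict p {1..n}) ` ?P = ?F"
  proof (rule set_eqI, rule iffI)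
    fix f assume "f \<in> (\<lambda>p. restrict p {1..n}) ` ?P"
    then obtain p where p: "p \<in> ?P" "f = restrict p {1..n}" by auto
    then have pp: "p permutes {1..n}" by (auto simp: row_subgroup_def)
    then have "\<forall>z\<in>{1..n}. p z \<in> C z" using key p by blast
    moreover have "inj_on p {1..n}" using pp permutes_inj inj_on_subset by blast
    ultimately have "restrict p {1..n} \<in> PiE {1..n} C" "inj_on (restrict p {1..n}) {1..n}"
      by (simp_all add: restrict_PiE_iff inj_on_cong[of "{1..n}" "restrict p {1..n}" p])
    then show "f \<in> ?F" using p(2) by simp
  next
    fix f assume f: "f \<in> ?F"
    define p where "p = (\<lambda>x. if x \<in> {1..n} then f x else x)"
    have injp: "inj_on p {1..n}" using f inj_on_cong[of "{1..n}" p f] unfolding p_def by simp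
    have sub: "p ` {1..n} \<subseteq> {1..n}"
    proof
      fix y assume "y \<in> p ` {1..n}"
      then obtain z where z: "z \<in> {1..n}" "y = f z" unfolding p_def by auto
      then have "f z \<in> C z" using f by (auto simp: PiE_def)
      then show "y \<in> {1..n}" using z Vs mn assms(3) assms(5) unfolding C_def by (auto split: if_splits)
    qed
    have "p ` {1..n} = {1..n}" by (rule endo_inj_surj) (use sub injp in auto)
    then have bp: "bij_betw p {1..n} {1..n}" using injp by (simp add: bij_betw_def)
    have "p x = x" if "x \<notin> {1..n}" for x using that by (auto simp: p_def)
    then have pp: "p permutes {1..n}" using bp bij_imp_permutes by blast
    have "\<forall>z\<in>{1..n}. p z \<in> C z" using f unfolding p_def by (simp add: PiE_iff)
    then have "p \<in> ?P" using key pp by blast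
    moreover have "f = restrict p {1..n}"
    proof
      fix x show "f x = restrict p {1..n} x"
        using f unfolding p_def by (cases "x \<in> {1..n}") (auto simp: PiE_iff extensional_def)
    qed
    ultimately show "f \<in> (\<lambda>p. restrict p {1..n}) ` ?P" by blast
  qed
  also have "{1..n} = W \<union> ({n-m+1..n-k} - W) \<union> {n-k+1..n} \<union> {1..n-m}"
    using assms(5) assms(3) mn by (auto dest: Wr)
  also have "C = (\<lambda>z. if z \<in> W then {1..n-m} - V
     else if z \<in> {n-m+1..n-k} - W then {n-m+1..n-k} \<union> V
     else if z \<in> {n-k+1..n} then {n-k+1..n} else {1..n-k})" by (rule C_def)
  also have "card {f \<in> PiE (W \<union> ({n-m+1..n-k} - W) \<union> {n-k+1..n} \<union> {1..n-m}) (\<lambda>z. if z \<in> W then {1..n-m} - V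
     else if z \<in> {n-m+1..n-k} - W then {n-m+1..n-k} \<union> V
     else if z \<in> {n-k+1..n} then {n-k+1..n} else {1..n-k}). inj_on f (W \<union> ({n-m+1..n-k} - W) \<union> {n-k+1..n} \<union> {1..n-m})}
     = ff (card ({1..n-m} - V)) (card W) * ff (card ({n-m+1..n-k} \<union> V)) (card ({n-m+1..n-k} - W))
       * ff (card {n-k+1..n}) (card {n-k+1..n}) * ff (card {1..n-k} - card W - card ({n-m+1..n-k} - W)) (card {1..n-m})"
    by (rule stage1) (use assms mn Vs finite_subset[OF assms(5)] fV0 in \<open>auto dest: Vr Wr\<close>)
  also have "\<dots> = ((n - m - card V) choose card W) * fact (card W)
           * ((m - k + card V) choose (m - k - card W)) * fact (m - k - card W)
           * fact k * fact (n - m)"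
  proof -
    have fW: "finite W" using finite_subset[OF assms(5)] by auto
    have fV: "finite V" using finite_subset[OF assms(4)] by auto
    have cW: "card W \<le> m - k" using card_mono[OF _ assms(5)] by auto
    have c1: "card ({1..n-m} - V) = n - m - card V" using Vs fV by (simp add: card_Diff_subset)
    have c2: "card ({n-m+1..n-k} \<union> V) = m - k + card V"
      using Vs fV assms(3) mn by (subst card_Un_disjoint) auto
    have c3: "card ({n-m+1..n-k} - W) = m - k - card W" using assms(5) fW assms(3) mn
      by (simp add: card_Diff_subset)
    have c4: "card {1..n-k} - card W - (m - k - card W) = n - m"
      using c3 cW assms(3) mn by simp
    have ffa: "ff a a = fact a" for a by (simp add: ff_def)
    have c5: "card {n-k+1..n} = k" using assms(3) mn by simp
    have c6: "card {1..n-m} = n - m" by simp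
    show ?thesis unfolding c1 c2 c3 c4 c5 c6 by (simp add: ffa ff_def mult.assoc)
  qed
  finally show ?thesis .
qed

end
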